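(* There exists a $(\mathbb{Z}_{40},[1,3,9,27],20)$ Hadamard partitioned difference family in the cyclic group $\mathbb{Z}_{40}$.
   Context: For $B\subseteq\mathbb{Z}_{40}$, $\Delta B$ is the multiset $\{x-y: x,y\in B, x\neq y\}$; for $\mathcal{F}=\{B_1,\dots,B_t\}$, $\Delta\mathcal{F}$ is the multiset union of the $\Delta B_i$. $\mathcal{F}$ is a $(G,[k_1,\dots,k_t],\lambda)$ partitioned difference family if the $B_i$ partition $G$, $|B_i|=k_i$, and $\Delta\mathcal{F}$ contains every non-zero element of $G$ exactly $\lambda$ times; it is Hadamard if $|G|=2\lambda$. *)

theory Defs
  imports Main "HOL-Library.Numeral_Type" "HOL-Library.Multiset"
begin

text \<open>The cyclic group Z_40 is rendered as the numeral type 40 (integers mod 40),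
  used as an additive group.\<close>

definition diff_mset :: "'a::ab_group_add set \<Rightarrow> 'a multiset" where
  "diff_mset B = image_mset (\<lambda>(x, y). x - y) (mset_set {(x, y). x \<in> B \<and> y \<in> B \<and> x \<noteq> y})"

definition family_diff :: "'a::ab_group_add set list \<Rightarrow> 'a multiset" where
  "family_diff Bs = sum_list (map diff_mset Bs)"

definition is_PDF :: "'a::{finite, ab_group_add} set list \<Rightarrow> nat list \<Rightarrow> nat \<Rightarrow> bool" where
  "is_PDF Bs ks lam \<longleftrightarrow>
     length Bs = length ks \<and>
     (\<forall>i < length Bs. card (Bs ! i) = ks ! i) \<and>
     (\<forall>i < length Bs. \<forall>j < length Bs. i \<noteq> j \<longrightarrow> Bs ! i \<inter> Bs ! j = {}) \<and>
     \<Union> (set Bs) = UNIV \<and>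
     (\<forall>g. g \<noteq> 0 \<longrightarrow> count (family_diff Bs) g = lam)"

definition is_Hadamard_PDF :: "'a::{finite, ab_group_add} set list \<Rightarrow> nat list \<Rightarrow> nat \<Rightarrow> bool" where
  "is_Hadamard_PDF Bs ks lam \<longleftrightarrow> is_PDF Bs ks lam \<and> CARD('a) = 2 * lam"

end

theory Submission imports Defs begin

lemma count_dm: "count (diff_mset (B::'a::{finite,ab_group_add} set)) g = card {(x,y). x \<in> B \<and> y \<in> B \<and> x \<noteq> y \<and> x - y = g}"
proof -
  let ?P = "{(x, y). x \<in> B \<and> y \<in> B \<and> x \<noteq> y}"
  let ?f = "\<lambda>(x, y). x - y :: 'a"
  have fin: "finite ?P" by simp
  have "count (diff_mset B) g = (\<Sum>p\<in>?f -` {g} \<inter> set_mset (mset_set ?P). count (mset_set ?P) p)"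
    unfolding diff_mset_def by (rule count_image_mset)
  also have "\<dots> = (\<Sum>p\<in>?f -` {g} \<inter> ?P. 1)"
    using fin by (intro sum.cong) auto
  also have "\<dots> = card (?f -` {g} \<inter> ?P)" by simp
  also have "?f -` {g} \<inter> ?P = {(x,y). x \<in> B \<and> y \<in> B \<and> x \<noteq> y \<and> x - y = g}"
    by auto
  finally show ?thesis .
qed

lemma count_fd: "count (family_diff Bs) g = sum_list (map (\<lambda>B. count (diff_mset B) g) Bs)"
  unfolding family_diff_def by (induction Bs) auto

lemma card40: "int CARD(40) = 40" by simp

lemma Rep_diff40: "Rep_bit0 (x - y :: 40) = (Rep_bit0 x - Rep_bit0 y) mod 40"
  proof -
  have "Rep_bit0 (Abs_bit0 ((Rep_bit0 x - Rep_bit0 y) mod int CARD(40)) :: 40) = (Rep_bit0 x - Rep_bit0 y) mod int CARD(40)"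
    by (rule bit0.Rep_Abs_mod)
  then show ?thesis unfolding bit0.diff_def by simp
qed

lemma Rep_range40: "0 \<le> Rep_bit0 (x::40) \<and> Rep_bit0 x < 40"
  using Rep_bit0[where x=x] by simp

lemma Rep_surj40: "0 \<le> a \<Longrightarrow> a < 40 \<Longrightarrow> \<exists>x::40. Rep_bit0 x = a"
  proof -
  assume "0 \<le> a" "a < 40"
  then have "Rep_bit0 (Abs_bit0 a :: 40) = a" by (intro Abs_bit0_inverse) simp
  then show ?thesis by blast
qed

lemma inj40: "inj (Rep_bit0 :: 40 \<Rightarrow> int)" by (rule injI) (simp add: Rep_bit0_inject)

definition blk :: "int list \<Rightarrow> 40 set" where "blk S = {x. Rep_bit0 x \<in> set S}"

lemma card_blk: assumes "distinct S" "set S \<subseteq> {0..<40}" shows "card (blk S) = length S"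
proof -
  have "Rep_bit0 ` blk S = set S"
    using assms Rep_surj40 unfolding blk_def by fastforce
  moreover have "inj_on Rep_bit0 (blk S)" using inj40 by (rule inj_on_subset) simp
  ultimately show ?thesis using assms card_image distinct_card by metis
qed

lemma count_blk:
  assumes "distinct S" "set S \<subseteq> {0..<40}" "g \<noteq> 0"
  shows "count (diff_mset (blk S)) g = length (filter (\<lambda>a. (a - Rep_bit0 g) mod 40 \<in> set S) S)"
proof -
  let ?B = "blk S"
  let ?X = "{x \<in> ?B. x - g \<in> ?B}"
  let ?P = "\<lambda>a. (a - Rep_bit0 g) mod 40 \<in> set S"
  have e1: "count (diff_mset ?B) g = card {(x,y). x \<in> ?B \<and> y \<in> ?B \<and> x \<noteq> y \<and> x - y = g}"
    by (rule count_dm)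
  have e2: "{(x,y). x \<in> ?B \<and> y \<in> ?B \<and> x \<noteq> y \<and> x - y = g} = (\<lambda>x. (x, x - g)) ` ?X"
  proof (intro set_eqI iffI)
    fix p assume "p \<in> {(x,y). x \<in> ?B \<and> y \<in> ?B \<and> x \<noteq> y \<and> x - y = g}"
    then obtain x y where "p = (x, y)" "x \<in> ?B" "y \<in> ?B" "x - y = g" by blast
    then have "y = x - g" "p = (x, x - g)" by (auto simp: algebra_simps)
    then show "p \<in> (\<lambda>x. (x, x - g)) ` ?X" using \<open>x \<in> ?B\<close> \<open>y \<in> ?B\<close> by blast
  next
    fix p assume "p \<in> (\<lambda>x. (x, x - g)) ` ?X"
    then obtain x where "p = (x, x - g)" "x \<in> ?B" "x - g \<in> ?B" by blast
    moreover have "x \<noteq> x - g" using assms(3) by simp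
    moreover have "x - (x - g) = g" by simp
    ultimately show "p \<in> {(x,y). x \<in> ?B \<and> y \<in> ?B \<and> x \<noteq> y \<and> x - y = g}" by simp
  qed
  have e3: "card ((\<lambda>x. (x, x - g)) ` ?X) = card ?X"
    by (rule card_image) (simp add: inj_on_def)
  have e4: "Rep_bit0 ` ?X = {a \<in> set S. ?P a}"
  proof (intro set_eqI iffI)
    fix a assume "a \<in> Rep_bit0 ` ?X"
    then obtain x where "a = Rep_bit0 x" "Rep_bit0 x \<in> set S" "Rep_bit0 (x - g) \<in> set S"
      unfolding blk_def by blast
    then show "a \<in> {a \<in> set S. ?P a}" by (simp add: Rep_diff40)
  next
    fix a assume a: "a \<in> {a \<in> set S. ?P a}"
    then have "0 \<le> a" "a < 40" using assms(2) by auto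
    then obtain x :: 40 where x: "Rep_bit0 x = a" using Rep_surj40 by blast
    then have "x \<in> ?X" using a unfolding blk_def by (simp add: Rep_diff40)
    then show "a \<in> Rep_bit0 ` ?X" using x by blast
  qed
  have e5: "card (Rep_bit0 ` ?X) = card ?X"
    by (rule card_image) (rule inj_on_subset[OF inj40], simp)
  have e6: "card {a \<in> set S. ?P a} = length (filter ?P S)"
  proof -
    have "card (set (filter ?P S)) = length (filter ?P S)"
      by (rule distinct_card) (simp add: assms(1))
    moreover have "set (filter ?P S) = {a \<in> set S. ?P a}" by simp
    ultimately show ?thesis by simp
  qed
  have "count (diff_mset ?B) g = card ?X" using e1 e2 e3 by simp
  also have "\<dots> = card (Rep_bit0 ` ?X)" using e5 by simp
  also have "\<dots> = length (filter ?P S)" using e4 e6 by simp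
  finally show ?thesis .
qed

definition "Ss0 = [[0::int], [10,20,30], [1,2,9,13,15,16,18,24,37],
  [3,4,5,6,7,8,11,12,14,17,19,21,22,23,25,26,27,28,29,31,32,33,34,35,36,38,39]]"

lemma C1: "\<forall>S \<in> set Ss0. distinct S \<and> set S \<subseteq> {0..<40}"
  by (simp add: Ss0_def)


lemma C3: "\<forall>i < length Ss0. \<forall>j < length Ss0. i \<noteq> j \<longrightarrow> set (Ss0 ! i) \<inter> set (Ss0 ! j) = {}"
  unfolding Ss0_def by code_simp

lemma C4: "\<forall>a \<in> {0..<40::int}. \<exists>S \<in> set Ss0. a \<in> set S"
  unfolding Ss0_def by code_simp

lemma C5: "\<forall>k \<in> {1..<40}. sum_list (map (\<lambda>S. length (filter (\<lambda>a. (a - k) mod 40 \<in> set S) S)) Ss0) = 20"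
  unfolding Ss0_def by code_simp


lemma blk_disj: "set S \<inter> set T = {} \<Longrightarrow> blk S \<inter> blk T = {}"
  unfolding blk_def by auto

lemma Rep_nz: "(g::40) \<noteq> 0 \<Longrightarrow> Rep_bit0 g \<in> {1..<40}"
proof -
  assume g: "g \<noteq> 0"
  have "Rep_bit0 g \<noteq> 0"
  proof
    assume "Rep_bit0 g = 0"
    then have "Rep_bit0 g = Rep_bit0 (0::40)" by (simp add: bit0.Rep_0)
    then show False using g inj40 by (simp add: inj_eq)
  qed
  then show ?thesis using Rep_range40[of g] by auto
qed

lemma Bs0_ok: "is_Hadamard_PDF (map blk Ss0) [1, 3, 9, 27] 20"
  unfolding is_Hadamard_PDF_def is_PDF_def
proof (intro conjI allI impI)
  show "length (map blk Ss0) = length [1, 3, 9, 27::nat]" by (simp add: Ss0_def)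
next
  fix i assume i: "i < length (map blk Ss0)"
  then have "card (blk (Ss0 ! i)) = length (Ss0 ! i)"
    using C1 by (intro card_blk) (auto simp: nth_mem)
  moreover have "map length Ss0 = [1, 3, 9, 27]" by (simp add: Ss0_def)
  ultimately show "card (map blk Ss0 ! i) = [1, 3, 9, 27] ! i"
    using i by (metis length_map nth_map)
next
  fix i j assume "i < length (map blk Ss0)" "j < length (map blk Ss0)" "i \<noteq> j"
  then show "map blk Ss0 ! i \<inter> map blk Ss0 ! j = {}"
    using C3 blk_disj by simp
next
  show "\<Union> (set (map blk Ss0)) = UNIV"
  proof (intro set_eqI iffI)
    fix x :: 40
    have "Rep_bit0 x \<in> {0..<40}" using Rep_range40[of x] by simp
    then obtain S where "S \<in> set Ss0" "Rep_bit0 x \<in> set S" using C4 by blast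
    then show "x \<in> \<Union> (set (map blk Ss0))" unfolding blk_def by auto
  qed simp
next
  fix g :: 40 assume g: "g \<noteq> 0"
  have "count (family_diff (map blk Ss0)) g = sum_list (map (\<lambda>S. count (diff_mset (blk S)) g) Ss0)"
    by (simp add: count_fd comp_def)
  also have "\<dots> = sum_list (map (\<lambda>S. length (filter (\<lambda>a. (a - Rep_bit0 g) mod 40 \<in> set S) S)) Ss0)"
    using C1 g by (intro arg_cong[where f=sum_list] map_cong refl count_blk) auto
  also have "\<dots> = 20" using C5 Rep_nz[OF g] by blast
  finally show "count (family_diff (map blk Ss0)) g = 20" .
next
  show "CARD(40) = 2 * 20" by simp
qed

theorem mainTheorem12:
  shows "\<exists>Bs :: 40 set list. is_Hadamard_PDF Bs [1, 3, 9, 27] 20"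
  using Bs0_ok by blast

end
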